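(* Let $\alpha_1,\alpha_2>0$ with $\alpha_1\neq\alpha_2$ and let $m\ge3(\alpha_1+\alpha_2)$. There exists a constant $C>0$ such that for all $A_1,A_2\in\mathbb{R}$ and all $A_3\in\mathbb{R}\setminus\{0\}$, $$\left|\int_0^1 e^{-i(A_1t^{\alpha_1}+A_2t^{\alpha_2}+A_3t^m)}\,t^{\alpha_1+\alpha_2-1}\,dt\right|\le C|A_3|^{-\frac{\alpha_1+\alpha_2}{m}}.$$ *)

theory Defs
  imports "HOL-Analysis.Analysis"
begin

end

theory Submission
  imports Defs
begin


lemma sgn_aux: "(s::real) \<in> {-1,1} \<Longrightarrow> s*(a-b) \<le> \<bar>a\<bar> + \<bar>b\<bar>"
  by auto

lemma vdc1:
  fixes \<phi> f f' :: "real \<Rightarrow> real"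
  assumes pq: "p \<le> q" and e: "\<epsilon> > 0"
   and dphi: "\<And>x. x \<in> {p..q} \<Longrightarrow> (\<phi> has_real_derivative f x) (at x)"
   and df: "\<And>x. x \<in> {p..q} \<Longrightarrow> (f has_real_derivative f' x) (at x)"
   and cf': "continuous_on {p..q} f'"
   and sgn: "(\<forall>x\<in>{p..q}. f' x \<ge> 0) \<or> (\<forall>x\<in>{p..q}. f' x \<le> 0)"
   and big: "\<And>x. x \<in> {p..q} \<Longrightarrow> \<epsilon> \<le> \<bar>f x\<bar>"
  shows "cmod (integral {p..q} (\<lambda>u. cis (- \<phi> u))) \<le> 4/\<epsilon>"
proof -
  define E where "E u = cis (- \<phi> u)" for u
  define G where "G u = complex_of_real (1 / f u) * (\<i> * E u)" for u
  define R where "R u = complex_of_real (f' u / (f u)^2) * (\<i> * E u)" for u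
  have fnz: "f x \<noteq> 0" if "x \<in> {p..q}" for x using big[OF that] e by auto
  have cphi: "continuous_on {p..q} \<phi>"
    by (meson DERIV_isCont continuous_at_imp_continuous_on dphi)
  have cf: "continuous_on {p..q} f"
    by (meson DERIV_isCont continuous_at_imp_continuous_on df)
  have cE: "continuous_on {p..q} E" unfolding E_def
    by (intro continuous_intros cphi)
  have cR: "continuous_on {p..q} R" unfolding R_def
    using fnz by (intro continuous_intros cf cf' cE) auto
  have dE: "(E has_vector_derivative (complex_of_real (- f x) * (\<i> * E x))) (at x within {p..q})"
    if "x \<in> {p..q}" for x
  proof -
    have "((\<lambda>u. - \<phi> u) has_real_derivative - f x) (at x within {p..q})"
      using has_field_derivative_at_within[OF DERIV_minus[OF dphi[OF that]]] .
    hence "((\<lambda>u. - \<phi> u) has_derivative (\<lambda>t. t * (- f x))) (at x within {p..q})"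
      unfolding has_field_derivative_def by (simp only: mult_commute_abs)
    from has_derivative_cis[OF this] show ?thesis
      unfolding E_def has_vector_derivative_def
      by (simp add: scaleR_conv_of_real mult.assoc)
  qed
  have d1f: "((\<lambda>u. 1 / f u) has_real_derivative (- f' x / (f x)^2)) (at x within {p..q})"
    if "x \<in> {p..q}" for x
    using has_field_derivative_at_within[OF DERIV_inverse_fun[OF df[OF that] fnz[OF that]]]
    by (simp add: inverse_eq_divide power2_eq_square)
  have dG: "(G has_vector_derivative (E x - R x)) (at x within {p..q})" if "x \<in> {p..q}" for x
  proof -
    have "(G has_vector_derivative
       (complex_of_real (1 / f x) * (\<i> * (complex_of_real (- f x) * (\<i> * E x)))
        + complex_of_real (- f' x / (f x)^2) * (\<i> * E x))) (at x within {p..q})"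
      unfolding G_def
      by (intro has_vector_derivative_mult has_vector_derivative_mult_right dE[OF that]
            has_vector_derivative_of_real d1f[OF that])
    moreover have "complex_of_real (1 / f x) * (\<i> * (complex_of_real (- f x) * (\<i> * E x)))
        + complex_of_real (- f' x / (f x)^2) * (\<i> * E x) = E x - R x"
      using fnz[OF that] unfolding R_def
      by (simp add: field_simps)
    ultimately show ?thesis by simp
  qed
  have I1: "((\<lambda>x. E x - R x) has_integral (G q - G p)) {p..q}"
    by (rule fundamental_theorem_of_calculus[OF pq dG])
  have IR: "R integrable_on {p..q}" by (rule integrable_continuous_interval[OF cR])
  have IE: "(E has_integral (G q - G p + integral {p..q} R)) {p..q}"
    using has_integral_add[OF I1 integrable_integral[OF IR]] by simp
  have nG: "cmod (G x) \<le> 1/\<epsilon>" if "x \<in> {p..q}" for x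
  proof -
    have "cmod (G x) = 1 / \<bar>f x\<bar>" unfolding G_def E_def by (simp add: norm_mult norm_divide)
    thus ?thesis using big[OF that] e by (simp add: frac_le)
  qed
  define H where "H u = \<bar>f' u\<bar> / (f u)^2" for u
  have nR: "norm (R x) \<le> H x" if "x \<in> {p..q}" for x
    unfolding R_def H_def E_def by (simp add: norm_mult norm_divide norm_power)
  have cH: "continuous_on {p..q} H" unfolding H_def
    using fnz by (intro continuous_intros cf cf') auto
  have IH: "H integrable_on {p..q}" by (rule integrable_continuous_interval[OF cH])
  have "integral {p..q} H \<le> 2/\<epsilon>"
  proof -
    have "\<exists>s. s \<in> {-1, 1} \<and> (\<forall>x\<in>{p..q}. H x = s * (f' x / (f x)^2))"
      using sgn unfolding H_def
      by (metis (no_types, lifting) abs_of_nonneg abs_of_nonpos insertCI minus_divide_left mult_1 mult_minus1)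
    then obtain s where s: "s \<in> {-1,1}" "\<And>x. x\<in>{p..q} \<Longrightarrow> H x = s * (f' x / (f x)^2)" by blast
    have "((\<lambda>x. s * (f' x / (f x)^2)) has_integral (s * (1 / f p - 1 / f q))) {p..q}"
    proof -
      have "((\<lambda>x. s * (f' x / (f x)^2)) has_integral ((\<lambda>u. - s * (1 / f u)) q - (\<lambda>u. - s * (1 / f u)) p)) {p..q}"
      proof (rule fundamental_theorem_of_calculus[OF pq])
        fix x assume x: "x \<in> {p..q}"
        have "((\<lambda>u. - s * (1 / f u)) has_real_derivative (- s * (- f' x / (f x)^2))) (at x within {p..q})"
          by (rule DERIV_cmult[OF d1f[OF x]])
        thus "((\<lambda>u. - s * (1 / f u)) has_vector_derivative s * (f' x / (f x)^2)) (at x within {p..q})"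
          by (simp add: has_real_derivative_iff_has_vector_derivative[symmetric])
      qed
      thus ?thesis by (simp add: algebra_simps)
    qed
    hence "(H has_integral (s * (1 / f p - 1 / f q))) {p..q}"
      by (subst has_integral_cong[OF s(2)]) auto
    hence "integral {p..q} H = s * (1 / f p - 1 / f q)" by (rule integral_unique)
    also have "\<dots> \<le> \<bar>1 / f p\<bar> + \<bar>1 / f q\<bar>" using s(1) by (rule sgn_aux)
    also have "\<dots> \<le> 1/\<epsilon> + 1/\<epsilon>"
      using big[of p] big[of q] pq e by (intro add_mono) (auto simp: divide_simps)
    finally show ?thesis by simp
  qed
  moreover have "cmod (integral {p..q} R) \<le> integral {p..q} H"
    by (rule integral_norm_bound_integral[OF IR IH nR]) 
  ultimately have "cmod (integral {p..q} R) \<le> 2/\<epsilon>" by linarith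
  moreover have "cmod (G q - G p) \<le> 2/\<epsilon>"
    using nG[of p] nG[of q] pq norm_triangle_ineq4[of "G q" "G p"] by auto
  ultimately have "cmod (G q - G p + integral {p..q} R) \<le> 4/\<epsilon>"
    using norm_triangle_ineq[of "G q - G p" "integral {p..q} R"] by linarith
  thus ?thesis using integral_unique[OF IE] unfolding E_def by simp
qed




lemma powr_split3: "0 < (x::real) \<Longrightarrow> x powr (M-1) = x powr (M-3) * x^2"
proof -
  assume x: "0 < x"
  have "x powr (M-1) = x powr ((M-3) + 2)" by simp
  also have "\<dots> = x powr (M-3) * x powr 2" by (rule powr_add)
  finally show ?thesis using x by simp
qed

lemma comp_len:
  fixes f g g' :: "real \<Rightarrow> real"
  assumes d0: "0 < \<delta>" and dr: "\<delta> \<le> r" and rs: "r \<le> s" and M3: "3 \<le> M" and c0: "0 < c"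
   and df: "\<And>x. x \<in> {r..s} \<Longrightarrow> (f has_real_derivative g x / x^2) (at x)"
   and dg: "\<And>x. x \<in> {r..s} \<Longrightarrow> (g has_real_derivative g' x) (at x)"
   and gbig: "\<And>x. x \<in> {r..s} \<Longrightarrow> c * x powr (M-1) \<le> g' x"
   and small: "\<And>x. x \<in> {r..s} \<Longrightarrow> \<bar>f x\<bar> \<le> \<epsilon>"
  shows "(s - r)^2 \<le> 64 * \<epsilon> / (c * \<delta> powr (M-3))"
proof -
  define m0 where "m0 = (r+s)/2"
  define L where "L = s - r"
  define \<kappa> where "\<kappa> = c * \<delta> powr (M-3) / 4"
  have k0: "\<kappa> > 0" unfolding \<kappa>_def using c0 d0 by simp
  have m0: "r \<le> m0" "m0 \<le> s" "\<delta> \<le> m0" "0 < m0" using rs dr d0 unfolding m0_def by auto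
  have Lm: "s - m0 = L/2" "m0 - r = L/2" unfolding m0_def L_def by (simp_all add: field_simps)
  have pos: "0 < x" if "x \<in> {r..s}" for x using that dr d0 by auto
  have dpm: "\<delta> powr (M-3) \<le> x powr (M-3)" if "\<delta> \<le> x" for x
    using that d0 M3 by (intro powr_mono2) auto
  have "\<kappa> * L^2 / 8 \<le> 2 * \<epsilon>"
  proof (cases "g m0 \<ge> 0")
    case True
    have gl: "c * m0 powr (M-1) * (v - m0) \<le> g v" if v: "v \<in> {m0..s}" for v
    proof -
      define kk where "kk = (\<lambda>x. g x - c * m0 powr (M-1) * x)"
      have "kk m0 \<le> kk v"
      proof (rule DERIV_nonneg_imp_nondecreasing[of m0 v kk])
        show "m0 \<le> v" using v by auto
        fix x assume x: "m0 \<le> x" "x \<le> v"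
        hence xi: "x \<in> {r..s}" using v m0 by auto
        have "c * m0 powr (M-1) \<le> c * x powr (M-1)"
          using c0 m0 x M3 by (intro mult_left_mono powr_mono2) auto
        hence "0 \<le> g' x - c * m0 powr (M - 1)" using gbig[OF xi] by linarith
        moreover have "((\<lambda>x. g x - c * m0 powr (M-1) * x) has_real_derivative (g' x - c * m0 powr (M-1))) (at x)"
          using dg[OF xi] by (auto intro!: derivative_eq_intros)
        ultimately show "\<exists>y. (kk has_real_derivative y) (at x) \<and> 0 \<le> y"
          unfolding kk_def by blast
      qed
      thus ?thesis using True unfolding kk_def by (simp add: algebra_simps)
    qed
    have fl: "\<kappa> * (v - m0) \<le> g v / v^2" if v: "v \<in> {m0..s}" for v
    proof -
      have v0: "0 < v" using v m0 by auto
      have "\<kappa> * (v - m0) \<le> c * \<delta> powr (M-3) * (m0^2 / s^2) * (v - m0)"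
      proof -
        have "s \<le> 2*m0" using m0 rs dr d0 unfolding m0_def by simp
        hence "s^2 \<le> (2*m0)^2" using rs dr d0 by (intro power_mono) auto
        hence "s^2 \<le> 4 * m0^2" by (simp add: power_mult_distrib)
        hence "1/4 \<le> m0^2 / s^2" using m0 rs by (simp add: field_simps)
        hence "c * \<delta> powr (M-3) * (1/4) \<le> c * \<delta> powr (M-3) * (m0^2 / s^2)"
          using c0 d0 by (intro mult_left_mono) auto
        hence "\<kappa> \<le> c * \<delta> powr (M-3) * (m0^2 / s^2)" unfolding \<kappa>_def by simp
        thus ?thesis using v by (intro mult_right_mono) auto
      qed
      also have "\<dots> \<le> c * m0 powr (M-3) * (m0^2 / s^2) * (v - m0)"
        using c0 dpm[OF m0(3)] v by (intro mult_right_mono) auto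
      also have "\<dots> = c * m0 powr (M-1) * (v - m0) / s^2"
        using powr_split3[OF m0(4), of M] by simp
      also have "\<dots> \<le> g v / s^2" using gl[OF v] by (simp add: divide_right_mono)
      also have "\<dots> \<le> g v / v^2"
        using gl[OF v] c0 m0 v v0 by (intro divide_left_mono) (auto intro!: order_trans[OF _ gl[OF v]] power_mono mult_pos_pos)
      finally show ?thesis .
    qed
    define kk where "kk = (\<lambda>x. f x - \<kappa> * (x - m0)^2 / 2)"
    have "kk m0 \<le> kk s"
    proof (rule DERIV_nonneg_imp_nondecreasing[of m0 s kk])
      show "m0 \<le> s" using m0 by auto
      fix x assume x: "m0 \<le> x" "x \<le> s"
      hence xi: "x \<in> {r..s}" using m0 by auto
      have "((\<lambda>x. f x - \<kappa> * (x - m0)^2 / 2) has_real_derivative (g x / x^2 - \<kappa> * (x - m0))) (at x)"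
        using df[OF xi] by (auto intro!: derivative_eq_intros)
      moreover have "0 \<le> g x / x^2 - \<kappa> * (x - m0)" using fl[of x] x by auto
      ultimately show "\<exists>y. (kk has_real_derivative y) (at x) \<and> 0 \<le> y"
        unfolding kk_def by blast
    qed
    hence "\<kappa> * L^2 / 8 \<le> f s - f m0" using Lm unfolding kk_def by (simp add: power2_eq_square field_simps)
    also have "\<dots> \<le> 2 * \<epsilon>" using small[of s] small[of m0] m0 rs by (auto simp: abs_le_iff)
    finally show ?thesis .
  next
    case False
    have gl: "g v \<le> - c * v powr (M-1) * (m0 - v)" if v: "v \<in> {r..m0}" for v
    proof -
      define kk where "kk = (\<lambda>x. g x - c * v powr (M-1) * x)"
      have "kk v \<le> kk m0"
      proof (rule DERIV_nonneg_imp_nondecreasing[of v m0 kk])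
        show "v \<le> m0" using v by auto
        fix x assume x: "v \<le> x" "x \<le> m0"
        hence xi: "x \<in> {r..s}" using v m0 by auto
        have "c * v powr (M-1) \<le> c * x powr (M-1)"
          using c0 v m0 x M3 dr d0 by (intro mult_left_mono powr_mono2) auto
        hence "0 \<le> g' x - c * v powr (M - 1)" using gbig[OF xi] by linarith
        moreover have "((\<lambda>x. g x - c * v powr (M-1) * x) has_real_derivative (g' x - c * v powr (M-1))) (at x)"
          using dg[OF xi] by (auto intro!: derivative_eq_intros)
        ultimately show "\<exists>y. (kk has_real_derivative y) (at x) \<and> 0 \<le> y"
          unfolding kk_def by blast
      qed
      thus ?thesis using False unfolding kk_def by (simp add: algebra_simps)
    qed
    have fl: "g v / v^2 \<le> - \<kappa> * (m0 - v)" if v: "v \<in> {r..m0}" for v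
    proof -
      have v0: "0 < v" "\<delta> \<le> v" using v dr d0 by auto
      have "g v / v^2 \<le> - c * v powr (M-1) * (m0 - v) / v^2"
        using divide_right_mono[OF gl[OF v], of "v^2"] by simp
      also have "\<dots> = - c * v powr (M-3) * (m0 - v)"
        using powr_split3[OF v0(1), of M] v0 by (simp add: field_simps)
      also have "\<dots> \<le> - c * \<delta> powr (M-3) * (m0 - v)"
        using c0 dpm[OF v0(2)] v by (simp add: mult_left_mono mult_right_mono)
      also have "\<dots> \<le> - \<kappa> * (m0 - v)"
        unfolding \<kappa>_def using c0 d0 v by (simp add: mult_right_mono)
      finally show ?thesis .
    qed
    define kk where "kk = (\<lambda>x. f x - \<kappa> * (m0 - x)^2 / 2)"
    have "kk r \<ge> kk m0"
    proof (rule DERIV_nonpos_imp_nonincreasing[of r m0 kk])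
      show "r \<le> m0" using m0 by auto
      fix x assume x: "r \<le> x" "x \<le> m0"
      hence xi: "x \<in> {r..s}" using m0 by auto
      have "((\<lambda>x. f x - \<kappa> * (m0 - x)^2 / 2) has_real_derivative (g x / x^2 + \<kappa> * (m0 - x))) (at x)"
        using df[OF xi] by (auto intro!: derivative_eq_intros simp: field_simps)
      moreover have "g x / x^2 + \<kappa> * (m0 - x) \<le> 0" using fl[of x] x by auto
      ultimately show "\<exists>y. (kk has_real_derivative y) (at x) \<and> y \<le> 0"
        unfolding kk_def by blast
    qed
    hence "\<kappa> * L^2 / 8 \<le> f r - f m0" using Lm unfolding kk_def by (simp add: power2_eq_square field_simps)
    also have "\<dots> \<le> 2 * \<epsilon>" using small[of r] small[of m0] m0 rs by (auto simp: abs_le_iff)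
    finally show ?thesis .
  qed
  thus ?thesis unfolding \<kappa>_def L_def using c0 d0 by (simp add: field_simps)
qed




lemma split_thr:
  fixes f :: "real \<Rightarrow> real"
  assumes pq: "p \<le> q" and cf: "continuous_on {p..q} f"
    and mono: "\<And>x y. p \<le> x \<Longrightarrow> x \<le> y \<Longrightarrow> y \<le> q \<Longrightarrow> f x \<le> f y"
  shows "\<exists>z\<in>{p..q}. (z = p \<or> (\<forall>x\<in>{p..z}. f x \<le> t)) \<and> (z = q \<or> (\<forall>x\<in>{z..q}. t \<le> f x))"
proof (cases "t \<le> f p")
  case True
  thus ?thesis using pq by (auto intro!: bexI[of _ p] order_trans[OF _ mono[of p]])
next
  case False
  show ?thesis
  proof (cases "f q \<le> t")
    case True
    thus ?thesis using pq by (auto intro!: bexI[of _ q] order_trans[OF mono[of _ q]])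
  next
    case False2: False
    obtain z where z: "p \<le> z" "z \<le> q" "f z = t" using IVT'[of f p t q] False False2 pq cf by auto
    thus ?thesis using mono by (intro bexI[of _ z]) auto
  qed
qed

lemma three_region_inc:
  fixes f :: "real \<Rightarrow> real"
  assumes pq: "p \<le> q" and cf: "continuous_on {p..q} f"
    and mono: "\<And>x y. p \<le> x \<Longrightarrow> x \<le> y \<Longrightarrow> y \<le> q \<Longrightarrow> f x \<le> f y"
    and e: "0 \<le> \<epsilon>"
  shows "\<exists>r s. p \<le> r \<and> r \<le> s \<and> s \<le> q \<and> (r = p \<or> (\<forall>x\<in>{p..r}. \<epsilon> \<le> \<bar>f x\<bar>))
     \<and> (r = s \<or> (\<forall>x\<in>{r..s}. \<bar>f x\<bar> \<le> \<epsilon>)) \<and> (s = q \<or> (\<forall>x\<in>{s..q}. \<epsilon> \<le> \<bar>f x\<bar>))"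
proof -
  obtain r where r: "r \<in> {p..q}" "r = p \<or> (\<forall>x\<in>{p..r}. f x \<le> -\<epsilon>)" "r = q \<or> (\<forall>x\<in>{r..q}. -\<epsilon> \<le> f x)"
    using split_thr[OF pq cf mono, of "-\<epsilon>"] by blast
  have cf2: "continuous_on {r..q} f" using cf r(1) by (auto intro: continuous_on_subset)
  obtain s where s: "s \<in> {r..q}" "s = r \<or> (\<forall>x\<in>{r..s}. f x \<le> \<epsilon>)" "s = q \<or> (\<forall>x\<in>{s..q}. \<epsilon> \<le> f x)"
    using split_thr[of r q f \<epsilon>] r(1) cf2 mono by auto
  show ?thesis
  proof (intro exI conjI)
    show "p \<le> r" "r \<le> s" "s \<le> q" using r s by auto
    show "r = p \<or> (\<forall>x\<in>{p..r}. \<epsilon> \<le> \<bar>f x\<bar>)" using r(2) by force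
    show "s = q \<or> (\<forall>x\<in>{s..q}. \<epsilon> \<le> \<bar>f x\<bar>)" using s(3) e by force
    show "r = s \<or> (\<forall>x\<in>{r..s}. \<bar>f x\<bar> \<le> \<epsilon>)"
    proof (cases "r = s")
      case False
      hence "r \<noteq> q" using s(1) by auto
      thus ?thesis using r(3) s(1) s(2) False by force
    qed simp
  qed
qed

lemma three_region:
  fixes f :: "real \<Rightarrow> real"
  assumes pq: "p \<le> q" and cf: "continuous_on {p..q} f"
    and mono: "(\<forall>x y. p \<le> x \<longrightarrow> x \<le> y \<longrightarrow> y \<le> q \<longrightarrow> f x \<le> f y) \<or>
               (\<forall>x y. p \<le> x \<longrightarrow> x \<le> y \<longrightarrow> y \<le> q \<longrightarrow> f y \<le> f x)"
    and e: "0 \<le> \<epsilon>"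
  shows "\<exists>r s. p \<le> r \<and> r \<le> s \<and> s \<le> q \<and> (r = p \<or> (\<forall>x\<in>{p..r}. \<epsilon> \<le> \<bar>f x\<bar>))
     \<and> (r = s \<or> (\<forall>x\<in>{r..s}. \<bar>f x\<bar> \<le> \<epsilon>)) \<and> (s = q \<or> (\<forall>x\<in>{s..q}. \<epsilon> \<le> \<bar>f x\<bar>))"
  using mono
proof
  assume "\<forall>x y. p \<le> x \<longrightarrow> x \<le> y \<longrightarrow> y \<le> q \<longrightarrow> f x \<le> f y"
  thus ?thesis using three_region_inc[OF pq cf _ e] by blast
next
  assume m: "\<forall>x y. p \<le> x \<longrightarrow> x \<le> y \<longrightarrow> y \<le> q \<longrightarrow> f y \<le> f x"
  have cf': "continuous_on {p..q} (\<lambda>x. - f x)" by (intro continuous_intros cf)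
  from three_region_inc[OF pq cf' _ e] m show ?thesis by auto
qed

lemma piece:
  fixes \<phi> f f' :: "real \<Rightarrow> real"
  assumes pq: "p \<le> q" and e: "\<epsilon> > 0"
   and dphi: "\<And>x. x \<in> {p..q} \<Longrightarrow> (\<phi> has_real_derivative f x) (at x)"
   and df: "\<And>x. x \<in> {p..q} \<Longrightarrow> (f has_real_derivative f' x) (at x)"
   and cf': "continuous_on {p..q} f'"
   and sgn: "(\<forall>x\<in>{p..q}. f' x \<ge> 0) \<or> (\<forall>x\<in>{p..q}. f' x \<le> 0)"
   and comp: "\<And>r s. p \<le> r \<Longrightarrow> r \<le> s \<Longrightarrow> s \<le> q \<Longrightarrow> (\<forall>x\<in>{r..s}. \<bar>f x\<bar> \<le> \<epsilon>) \<Longrightarrow> s - r \<le> Lb"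
   and Lb: "0 \<le> Lb"
  shows "cmod (integral {p..q} (\<lambda>u. cis (- \<phi> u))) \<le> 8/\<epsilon> + Lb"
proof -
  have cphi: "continuous_on {p..q} \<phi>"
    by (meson DERIV_isCont continuous_at_imp_continuous_on dphi)
  have cf: "continuous_on {p..q} f"
    by (meson DERIV_isCont continuous_at_imp_continuous_on df)
  have mono: "(\<forall>x y. p \<le> x \<longrightarrow> x \<le> y \<longrightarrow> y \<le> q \<longrightarrow> f x \<le> f y) \<or>
               (\<forall>x y. p \<le> x \<longrightarrow> x \<le> y \<longrightarrow> y \<le> q \<longrightarrow> f y \<le> f x)"
    using sgn
  proof
    assume s: "\<forall>x\<in>{p..q}. f' x \<ge> 0"
    have "f x \<le> f y" if "p \<le> x" "x \<le> y" "y \<le> q" for x y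
    proof (rule DERIV_nonneg_imp_nondecreasing[OF that(2)])
      fix z assume "x \<le> z" "z \<le> y"
      hence "z \<in> {p..q}" using that by auto
      thus "\<exists>y'. (f has_real_derivative y') (at z) \<and> 0 \<le> y'" using df s by blast
    qed
    thus ?thesis by blast
  next
    assume s: "\<forall>x\<in>{p..q}. f' x \<le> 0"
    have "f x \<ge> f y" if "p \<le> x" "x \<le> y" "y \<le> q" for x y
    proof (rule DERIV_nonpos_imp_nonincreasing[OF that(2)])
      fix z assume "x \<le> z" "z \<le> y"
      hence "z \<in> {p..q}" using that by auto
      thus "\<exists>y'. (f has_real_derivative y') (at z) \<and> y' \<le> 0" using df s by blast
    qed
    thus ?thesis by blast
  qed
  obtain r s where rs: "p \<le> r" "r \<le> s" "s \<le> q" "r = p \<or> (\<forall>x\<in>{p..r}. \<epsilon> \<le> \<bar>f x\<bar>)"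
     "r = s \<or> (\<forall>x\<in>{r..s}. \<bar>f x\<bar> \<le> \<epsilon>)" "s = q \<or> (\<forall>x\<in>{s..q}. \<epsilon> \<le> \<bar>f x\<bar>)"
    using three_region[OF pq cf mono, of \<epsilon>] e by auto
  define E where "E u = cis (- \<phi> u)" for u
  have cE: "continuous_on {p..q} E" unfolding E_def by (intro continuous_intros cphi)
  have IE: "E integrable_on {p..q}" by (rule integrable_continuous_interval[OF cE])
  have IE2: "E integrable_on {r..q}" by (rule integrable_subinterval_real[OF IE]) (use rs in auto)
  have split: "integral {p..q} E = integral {p..r} E + integral {r..s} E + integral {s..q} E"
    using Henstock_Kurzweil_Integration.integral_combine[of p r q E, OF rs(1) _ IE]
      Henstock_Kurzweil_Integration.integral_combine[of r s q E, OF rs(2) rs(3) IE2] rs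
    by (simp add: add.assoc)
  have sub: "{a..b} \<subseteq> {p..q}" if "p \<le> a" "b \<le> q" for a b using that by auto
  have b1: "cmod (integral {p..r} E) \<le> 4/\<epsilon>"
    using rs(4)
  proof
    assume "r = p" thus ?thesis using e by simp
  next
    assume big: "\<forall>x\<in>{p..r}. \<epsilon> \<le> \<bar>f x\<bar>"
    show ?thesis unfolding E_def
      by (rule vdc1[OF rs(1) e]) (use dphi df sgn big rs in \<open>auto intro: continuous_on_subset[OF cf']\<close>)
  qed
  have b3: "cmod (integral {s..q} E) \<le> 4/\<epsilon>"
    using rs(6)
  proof
    assume "s = q" thus ?thesis using e by simp
  next
    assume big: "\<forall>x\<in>{s..q}. \<epsilon> \<le> \<bar>f x\<bar>"
    show ?thesis unfolding E_def
      by (rule vdc1[OF rs(3) e]) (use dphi df sgn big rs in \<open>auto intro: continuous_on_subset[OF cf']\<close>)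
  qed
  have b2: "cmod (integral {r..s} E) \<le> Lb"
    using rs(5)
  proof
    assume "r = s" thus ?thesis using Lb by simp
  next
    assume small: "\<forall>x\<in>{r..s}. \<bar>f x\<bar> \<le> \<epsilon>"
    have IE3: "E integrable_on {r..s}" by (rule integrable_subinterval_real[OF IE]) (use rs in auto)
    have "cmod (integral {r..s} E) \<le> 1 * Henstock_Kurzweil_Integration.content (cbox r s)"
      by (rule has_integral_bound[of 1 E _ r s]) (use IE3 in \<open>auto simp: E_def\<close>)
    also have "\<dots> = s - r" using rs by simp
    also have "\<dots> \<le> Lb" using comp[OF rs(1,2,3) small] .
    finally show ?thesis .
  qed
  have "cmod (integral {p..q} E) \<le> cmod (integral {p..r} E) + cmod (integral {r..s} E) + cmod (integral {s..q} E)"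
    unfolding split by (intro order_trans[OF norm_triangle_ineq] add_mono) auto
  also have "\<dots> \<le> 4/\<epsilon> + Lb + 4/\<epsilon>" using b1 b2 b3 by linarith
  finally show ?thesis unfolding E_def by simp
qed




definition csign :: "real set \<Rightarrow> (real \<Rightarrow> real) \<Rightarrow> bool" where
  "csign S h \<longleftrightarrow> (\<forall>x\<in>S. h x \<ge> 0) \<or> (\<forall>x\<in>S. h x \<le> 0)"

definition monoab :: "real \<Rightarrow> real \<Rightarrow> (real \<Rightarrow> real) \<Rightarrow> bool" where
  "monoab p q h \<longleftrightarrow> (\<forall>x y. p \<le> x \<longrightarrow> x \<le> y \<longrightarrow> y \<le> q \<longrightarrow> h x \<le> h y) \<or>
               (\<forall>x y. p \<le> x \<longrightarrow> x \<le> y \<longrightarrow> y \<le> q \<longrightarrow> h y \<le> h x)"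

lemma deriv_monoab:
  fixes h h' :: "real \<Rightarrow> real"
  assumes dh: "\<And>x. x \<in> {p..q} \<Longrightarrow> (h has_real_derivative h' x) (at x)"
    and cs: "csign {p..q} h'"
  shows "monoab p q h"
  using cs unfolding csign_def monoab_def
proof
  assume s: "\<forall>x\<in>{p..q}. h' x \<ge> 0"
  have "h x \<le> h y" if "p \<le> x" "x \<le> y" "y \<le> q" for x y
  proof (rule DERIV_nonneg_imp_nondecreasing[OF that(2)])
    fix z assume "x \<le> z" "z \<le> y"
    hence "z \<in> {p..q}" using that by auto
    thus "\<exists>y'. (h has_real_derivative y') (at z) \<and> 0 \<le> y'" using dh s by blast
  qed
  thus "(\<forall>x y. p \<le> x \<longrightarrow> x \<le> y \<longrightarrow> y \<le> q \<longrightarrow> h x \<le> h y) \<or>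
               (\<forall>x y. p \<le> x \<longrightarrow> x \<le> y \<longrightarrow> y \<le> q \<longrightarrow> h y \<le> h x)" by blast
next
  assume s: "\<forall>x\<in>{p..q}. h' x \<le> 0"
  have "h x \<ge> h y" if "p \<le> x" "x \<le> y" "y \<le> q" for x y
  proof (rule DERIV_nonpos_imp_nonincreasing[OF that(2)])
    fix z assume "x \<le> z" "z \<le> y"
    hence "z \<in> {p..q}" using that by auto
    thus "\<exists>y'. (h has_real_derivative y') (at z) \<and> y' \<le> 0" using dh s by blast
  qed
  thus "(\<forall>x y. p \<le> x \<longrightarrow> x \<le> y \<longrightarrow> y \<le> q \<longrightarrow> h x \<le> h y) \<or>
               (\<forall>x y. p \<le> x \<longrightarrow> x \<le> y \<longrightarrow> y \<le> q \<longrightarrow> h y \<le> h x)" by blast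
qed

lemma csplit:
  fixes h :: "real \<Rightarrow> real"
  assumes pq: "p \<le> q" and ch: "continuous_on {p..q} h" and m: "monoab p q h"
  shows "\<exists>z\<in>{p..q}. csign {p..z} h \<and> csign {z..q} h"
  using m unfolding monoab_def
proof
  assume m1: "\<forall>x y. p \<le> x \<longrightarrow> x \<le> y \<longrightarrow> y \<le> q \<longrightarrow> h x \<le> h y"
  obtain z where z: "z \<in> {p..q}" "z = p \<or> (\<forall>x\<in>{p..z}. h x \<le> 0)" "z = q \<or> (\<forall>x\<in>{z..q}. 0 \<le> h x)"
    using split_thr[OF pq ch, of 0] m1 by blast
  have "csign {p..z} h" using z(2) unfolding csign_def by auto
  moreover have "csign {z..q} h" using z(3) unfolding csign_def by auto
  ultimately show ?thesis using z(1) by blast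
next
  assume m1: "\<forall>x y. p \<le> x \<longrightarrow> x \<le> y \<longrightarrow> y \<le> q \<longrightarrow> h y \<le> h x"
  have ch': "continuous_on {p..q} (\<lambda>x. - h x)" by (intro continuous_intros ch)
  obtain z where z: "z \<in> {p..q}" "z = p \<or> (\<forall>x\<in>{p..z}. - h x \<le> 0)" "z = q \<or> (\<forall>x\<in>{z..q}. 0 \<le> - h x)"
    using split_thr[OF pq ch', of 0] m1 by force
  have "csign {p..z} h" using z(2) unfolding csign_def by auto
  moreover have "csign {z..q} h" using z(3) unfolding csign_def by auto
  ultimately show ?thesis using z(1) by blast
qed

lemma csign_mult:
  assumes "csign S h" "\<And>x. x \<in> S \<Longrightarrow> w x > 0" "\<And>x. x \<in> S \<Longrightarrow> k x = w x * h x"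
  shows "csign S k"
proof -
  have w: "x \<in> S \<Longrightarrow> 0 \<le> w x" for x using assms(2)[of x] by simp
  have a: "\<forall>x\<in>S. k x \<ge> 0" if "\<forall>x\<in>S. h x \<ge> 0" using that w assms(3) by (simp add: mult_nonneg_nonneg)
  have b: "\<forall>x\<in>S. k x \<le> 0" if "\<forall>x\<in>S. h x \<le> 0" using that w assms(3) by (simp add: mult_nonneg_nonpos)
  show ?thesis using assms(1) a b unfolding csign_def by blast
qed

lemma csign_sub: "csign S h \<Longrightarrow> T \<subseteq> S \<Longrightarrow> csign T h"
  unfolding csign_def by blast

lemma pw2: "0 < (u::real) \<Longrightarrow> u powr (b - 1 - 1) = u powr b / u^2"
proof -
  assume u: "0 < u"
  have "u powr (b - 1 - 1) = u powr (b - 2)" by simp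
  also have "\<dots> = u powr b / u powr 2" by (rule powr_diff)
  finally show ?thesis using u by simp
qed

lemma norm_tri2: "norm y \<le> B \<Longrightarrow> norm (x + y) \<le> norm x + (B::real)"
  using norm_triangle_ineq[of x y] by linarith

lemma ulemma:
  fixes b1 b2 M A1 A2 A3 :: real
  assumes b1: "0 < b1" and b2: "0 < b2" and b12: "b1 + b2 = 1" and M3: "3 \<le> M" and A3: "A3 \<noteq> 0"
  shows "cmod (integral {0..1} (\<lambda>u. cis (- (A1 * u powr b1 + A2 * u powr b2 + A3 * u powr M))))
          \<le> 97 * \<bar>A3\<bar> powr (- 1 / M)"
proof -
  define l where "l = \<bar>A3\<bar>"
  have l0: "0 < l" using A3 unfolding l_def by simp
  define \<phi> where "\<phi> u = A1 * u powr b1 + A2 * u powr b2 + A3 * u powr M" for u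
  define E where "E u = cis (- \<phi> u)" for u
  have cphi: "continuous_on {0..1} \<phi>" unfolding \<phi>_def
    using b1 b2 M3 by (intro continuous_intros continuous_on_powr') auto
  have cE: "continuous_on {0..1} E" unfolding E_def by (intro continuous_intros cphi)
  have IE: "E integrable_on {0..1}" by (rule integrable_continuous_interval[OF cE])
  have bnd: "cmod (integral {a..b} E) \<le> b - a" if "0 \<le> a" "a \<le> b" "b \<le> 1" for a b
  proof -
    have IE3: "E integrable_on {a..b}" by (rule integrable_subinterval_real[OF IE]) (use that in auto)
    have "cmod (integral {a..b} E) \<le> 1 * Henstock_Kurzweil_Integration.content (cbox a b)"
      by (rule has_integral_bound[of 1 E _ a b]) (use IE3 in \<open>auto simp: E_def\<close>)
    thus ?thesis using that by simp
  qed
  show ?thesis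
  proof (cases "l \<le> 1")
    case True
    have "l powr (1/M) \<le> 1" using True l0 M3 by (intro powr_le1) auto
    moreover have "l powr (-1/M) = 1 / l powr (1/M)"
      using powr_minus_divide[of l "1/M"] by (simp only: minus_divide_left)
    moreover have "0 < l powr (1/M)" using l0 by simp
    ultimately have "1 \<le> l powr (-1/M)" by (simp only: le_divide_eq_1_pos)
    moreover have "cmod (integral {0..1} E) \<le> 1" using bnd[of 0 1] by simp
    ultimately show ?thesis unfolding E_def \<phi>_def l_def by linarith
  next
    case False
    hence l1: "1 < l" by simp
    define \<delta> where "\<delta> = l powr (-1/M)"
    define \<epsilon> where "\<epsilon> = l powr (1/M)"
    have d0: "0 < \<delta>" and e0: "0 < \<epsilon>" unfolding \<delta>_def \<epsilon>_def using l0 by auto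
    have de: "\<delta> * \<epsilon> = 1" unfolding \<delta>_def \<epsilon>_def using l0
      using powr_add[of l "-1/M" "1/M", symmetric] by simp
    have d1: "\<delta> < 1" unfolding \<delta>_def using l1 M3
      by (intro powr_less_one) auto

    define c1 where "c1 = A1 * (b1 * (b1 - 1))"
    define c2 where "c2 = A2 * (b2 * (b2 - 1))"
    define c3 where "c3 = A3 * (M * (M - 1))"
    define f where "f u = A1 * (b1 * u powr (b1 - 1)) + A2 * (b2 * u powr (b2 - 1)) + A3 * (M * u powr (M - 1))" for u
    define g where "g u = c1 * u powr b1 + c2 * u powr b2 + c3 * u powr M" for u
    define g' where "g' u = c1 * (b1 * u powr (b1 - 1)) + c2 * (b2 * u powr (b2 - 1)) + c3 * (M * u powr (M - 1))" for u
    define f' where "f' u = g u / u^2" for u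
    have dpow: "\<And>b x. 0 < x \<Longrightarrow> ((\<lambda>u. u powr b) has_real_derivative b * x powr (b - 1)) (at x)"
      by (rule has_real_derivative_powr)
    have dphi: "(\<phi> has_real_derivative f x) (at x)" if "0 < x" for x
    proof -
      have "((\<lambda>u. A1 * u powr b1 + A2 * u powr b2 + A3 * u powr M) has_real_derivative f x) (at x)"
        unfolding f_def by (intro DERIV_add DERIV_cmult dpow that)
      moreover have "(\<lambda>u. A1 * u powr b1 + A2 * u powr b2 + A3 * u powr M) = \<phi>"
        by (rule ext) (simp add: \<phi>_def)
      ultimately show ?thesis by simp
    qed
    have df: "(f has_real_derivative f' x) (at x)" if x: "0 < x" for x
    proof -
      have "((\<lambda>u. A1 * (b1 * u powr (b1 - 1)) + A2 * (b2 * u powr (b2 - 1)) + A3 * (M * u powr (M - 1)))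
        has_real_derivative A1 * (b1 * ((b1-1) * x powr (b1-1-1))) + A2*(b2*((b2-1)*x powr (b2-1-1)))
           + A3*(M*((M-1)*x powr (M-1-1)))) (at x)"
        by (intro DERIV_add DERIV_cmult dpow that)
      moreover have "(\<lambda>u. A1 * (b1 * u powr (b1 - 1)) + A2 * (b2 * u powr (b2 - 1)) + A3 * (M * u powr (M - 1))) = f"
        by (rule ext) (simp add: f_def)
      moreover have "A1 * (b1 * ((b1-1) * x powr (b1-1-1))) + A2*(b2*((b2-1)*x powr (b2-1-1)))
           + A3*(M*((M-1)*x powr (M-1-1))) = f' x"
        unfolding f'_def g_def c1_def c2_def c3_def pw2[OF x] using x by (simp add: field_simps)
      ultimately show ?thesis by simp
    qed
    have dg: "(g has_real_derivative g' x) (at x)" if x: "0 < x" for x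
    proof -
      have "((\<lambda>u. c1 * u powr b1 + c2 * u powr b2 + c3 * u powr M) has_real_derivative g' x) (at x)"
        unfolding g'_def by (intro DERIV_add DERIV_cmult dpow that)
      moreover have "(\<lambda>u. c1 * u powr b1 + c2 * u powr b2 + c3 * u powr M) = g"
        by (rule ext) (simp add: g_def)
      ultimately show ?thesis by simp
    qed
    define K where "K = M * (M - b1) * (M - b2)"
    have ident: "g' x + b1 * b2 * f x = K * A3 * x powr (M - 1)" for x
    proof -
      have e2: "b2 = 1 - b1" using b12 by simp
      show ?thesis unfolding g'_def f_def c1_def c2_def c3_def K_def e2
        by (simp add: algebra_simps)
    qed
    have b1l: "b1 < 1" and b2l: "b2 < 1" using b1 b2 b12 by auto
    have K2: "2 \<le> K"
    proof -
      have "3 * 1 \<le> M * (M - b1)" using M3 b1l by (intro mult_mono) auto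
      hence "3 * 1 \<le> M * (M - b1) * (M - b2)" using M3 b2l by (intro mult_mono) auto
      thus ?thesis unfolding K_def by simp
    qed
    have bb: "b1 * b2 \<le> 1" using b1 b2 b1l b2l by (simp add: mult_le_one)
    have le1: "l * \<delta> powr (M-1) = \<epsilon>"
    proof -
      have "l * \<delta> powr (M-1) = l powr 1 * l powr ((-1/M)*(M-1))"
        unfolding \<delta>_def powr_powr using l0 by simp
      also have "\<dots> = l powr (1 + (-1/M)*(M-1))" by (rule powr_add[symmetric])
      also have "1 + (-1/M)*(M-1) = 1/M" using M3 by (simp add: field_simps)
      finally show ?thesis unfolding \<epsilon>_def .
    qed
    have le3: "64 * \<epsilon> / (l * \<delta> powr (M-3)) = (8 * \<delta>)^2"
    proof -
      have "l * \<delta> powr (M-3) = l powr 1 * l powr ((-1/M)*(M-3))"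
        unfolding \<delta>_def powr_powr using l0 by simp
      also have "\<dots> = l powr (1 + (-1/M)*(M-3))" by (rule powr_add[symmetric])
      also have "1 + (-1/M)*(M-3) = 3/M" using M3 by (simp add: field_simps)
      finally have a: "l * \<delta> powr (M-3) = l powr (3/M)" .
      have "\<epsilon> / l powr (3/M) = l powr (1/M - 3/M)" unfolding \<epsilon>_def by (rule powr_diff[symmetric])
      also have "1/M - 3/M = (-1/M) * 2" by (simp add: field_simps)
      also have "l powr ((-1/M) * 2) = \<delta> powr 2" unfolding \<delta>_def powr_powr ..
      also have "\<dots> = \<delta>^2" using d0 by simp
      finally have "\<epsilon> / l powr (3/M) = \<delta>^2" .
      thus ?thesis unfolding a by (simp add: power_mult_distrib)
    qed
    have comp: "s - r \<le> 8 * \<delta>" if rs: "\<delta> \<le> r" "r \<le> s" "s \<le> 1" and sm: "\<forall>x\<in>{r..s}. \<bar>f x\<bar> \<le> \<epsilon>" for r s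
    proof -
      define \<sigma> where "\<sigma> = sgn A3"
      have sA: "\<sigma> * A3 = l" unfolding \<sigma>_def l_def by (simp add: abs_sgn mult.commute)
      have s1: "\<bar>\<sigma>\<bar> = 1" unfolding \<sigma>_def using A3 by (simp add: abs_sgn)
      have pos: "0 < x" if "x \<in> {r..s}" for x using that rs d0 by auto
      have "(s - r)^2 \<le> 64 * \<epsilon> / (l * \<delta> powr (M-3))"
      proof (rule comp_len[of \<delta> r s M l "\<lambda>x. \<sigma> * f x" "\<lambda>x. \<sigma> * g x" "\<lambda>x. \<sigma> * g' x" \<epsilon>])
        show "0 < \<delta>" "\<delta> \<le> r" "r \<le> s" "3 \<le> M" "0 < l" using d0 rs M3 l0 by auto
        fix x assume x: "x \<in> {r..s}"
        show "((\<lambda>x. \<sigma> * f x) has_real_derivative \<sigma> * g x / x^2) (at x)"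
          using DERIV_cmult[OF df[OF pos[OF x]], of \<sigma>] by (simp add: f'_def)
        show "((\<lambda>x. \<sigma> * g x) has_real_derivative \<sigma> * g' x) (at x)"
          using DERIV_cmult[OF dg[OF pos[OF x]], of \<sigma>] .
        show "\<bar>\<sigma> * f x\<bar> \<le> \<epsilon>" using sm x s1 by (simp add: abs_mult)
        have "\<epsilon> \<le> l * x powr (M-1)"
          unfolding le1[symmetric] using l0 x rs d0 M3 by (intro mult_left_mono powr_mono2) auto
        have "\<sigma> * g' x = K * l * x powr (M-1) - \<sigma> * (b1 * b2 * f x)"
        proof -
          have "g' x = K * A3 * x powr (M-1) - b1 * b2 * f x" using ident[of x] by linarith
          hence "\<sigma> * g' x = \<sigma> * (K * A3 * x powr (M-1)) - \<sigma> * (b1 * b2 * f x)"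
            by (simp add: right_diff_distrib)
          moreover have "\<sigma> * (K * A3 * x powr (M-1)) = K * (\<sigma> * A3) * x powr (M-1)"
            by (simp add: ac_simps)
          ultimately show ?thesis unfolding sA by simp
        qed
        moreover have "\<bar>\<sigma> * (b1 * b2 * f x)\<bar> \<le> \<epsilon>"
        proof -
          have "\<bar>\<sigma> * (b1 * b2 * f x)\<bar> = b1 * b2 * \<bar>f x\<bar>" using s1 b1 b2 by (simp add: abs_mult)
          also have "\<dots> \<le> 1 * \<epsilon>" using bb sm x b1 b2 by (intro mult_mono) auto
          finally show ?thesis by simp
        qed
        moreover have "2 * (l * x powr (M-1)) \<le> K * (l * x powr (M-1))"
          using K2 l0 by (intro mult_right_mono) auto
        moreover have "K * (l * x powr (M-1)) = K * l * x powr (M-1)" by (rule mult.assoc[symmetric])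
        moreover have "- (\<sigma> * (b1 * b2 * f x)) \<le> \<bar>\<sigma> * (b1 * b2 * f x)\<bar>" by (rule abs_ge_minus_self)
        ultimately show "l * x powr (M-1) \<le> \<sigma> * g' x"
          using \<open>\<epsilon> \<le> l * x powr (M-1)\<close> by linarith
      qed
      hence "(s - r)^2 \<le> (8 * \<delta>)^2" using le3 by simp
      thus ?thesis by (rule power2_le_imp_le) (use d0 in simp)
    qed
    have pos: "0 < x" if "\<delta> \<le> x" for x using that d0 by auto
    define h where "h u = c1 + c2 * u powr (b2 - b1) + c3 * u powr (M - b1)" for u
    define h' where "h' u = c2 * ((b2 - b1) * u powr (b2 - b1 - 1)) + c3 * ((M - b1) * u powr (M - b1 - 1))" for u
    define k where "k u = c2 * (b2 - b1) + c3 * (M - b1) * u powr (M - b2)" for u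
    have dh: "(h has_real_derivative h' x) (at x)" if x: "0 < x" for x
    proof -
      have "((\<lambda>u. c1 + c2 * u powr (b2 - b1) + c3 * u powr (M - b1)) has_real_derivative
          0 + c2 * ((b2 - b1) * x powr (b2 - b1 - 1)) + c3 * ((M - b1) * x powr (M - b1 - 1))) (at x)"
        by (intro DERIV_add DERIV_cmult DERIV_const dpow that)
      moreover have "(\<lambda>u. c1 + c2 * u powr (b2 - b1) + c3 * u powr (M - b1)) = h"
        by (rule ext) (simp add: h_def)
      ultimately show ?thesis by (simp add: h'_def)
    qed
    have hk: "h' x = x powr (b2 - b1 - 1) * k x" if x: "0 < x" for x
    proof -
      have "x powr (b2 - b1 - 1) * x powr (M - b2) = x powr ((b2 - b1 - 1) + (M - b2))"
        by (rule powr_add[symmetric])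
      also have "(b2 - b1 - 1) + (M - b2) = M - b1 - 1" by simp
      finally have "x powr (b2 - b1 - 1) * x powr (M - b2) = x powr (M - b1 - 1)" .
      thus ?thesis unfolding h'_def k_def by (simp add: algebra_simps)
    qed
    have gh: "f' x = (x powr b1 / x^2) * h x" for x
    proof -
      have a: "x powr b1 * x powr (b2 - b1) = x powr b2"
        using powr_add[of x b1 "b2 - b1", symmetric] by simp
      have b: "x powr b1 * x powr (M - b1) = x powr M"
        using powr_add[of x b1 "M - b1", symmetric] by simp
      show ?thesis unfolding f'_def g_def h_def a[symmetric] b[symmetric]
        by (simp add: add_divide_distrib algebra_simps)
    qed
    have ck: "continuous_on {\<delta>..1} k" unfolding k_def
      using d0 by (intro continuous_intros) auto
    have mk: "monoab \<delta> 1 k"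
    proof (cases "0 \<le> c3 * (M - b1)")
      case True
      have "k x \<le> k y" if "\<delta> \<le> x" "x \<le> y" for x y
        unfolding k_def using True that d0 M3 b2l
        by (intro add_left_mono mult_left_mono powr_mono2) auto
      thus ?thesis unfolding monoab_def by blast
    next
      case False
      have "k y \<le> k x" if "\<delta> \<le> x" "x \<le> y" for x y
      proof -
        have "x powr (M - b2) \<le> y powr (M - b2)" using that d0 M3 b2l by (intro powr_mono2) auto
        hence "c3 * (M - b1) * y powr (M - b2) \<le> c3 * (M - b1) * x powr (M - b2)"
          using False by (intro mult_left_mono_neg) auto
        thus ?thesis unfolding k_def by simp
      qed
      thus ?thesis unfolding monoab_def by blast
    qed
    obtain z where z: "z \<in> {\<delta>..1}" "csign {\<delta>..z} k" "csign {z..1} k"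
      using csplit[OF _ ck mk] d1 by auto
    have hpart: "\<exists>w\<in>{p..q}. csign {p..w} h \<and> csign {w..q} h"
      if pq: "\<delta> \<le> p" "p \<le> q" "q \<le> 1" and cs: "csign {p..q} k" for p q
    proof (rule csplit[OF pq(2)])
      show "continuous_on {p..q} h"
        by (meson DERIV_isCont continuous_at_imp_continuous_on dh pos atLeastAtMost_iff pq(1) order_trans)
      have "csign {p..q} h'"
        by (rule csign_mult[OF cs, of "\<lambda>x. x powr (b2 - b1 - 1)"]) (use pq d0 hk in \<open>auto intro: less_le_trans\<close>)
      thus "monoab p q h"
        by (rule deriv_monoab[rotated]) (use pq pos dh in auto)
    qed
    obtain z1 where z1: "z1 \<in> {\<delta>..z}" "csign {\<delta>..z1} h" "csign {z1..z} h"
      using hpart[of \<delta> z] z by auto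
    obtain z2 where z2: "z2 \<in> {z..1}" "csign {z..z2} h" "csign {z2..1} h"
      using hpart[of z 1] z by auto
    have pc: "cmod (integral {p..q} E) \<le> 16 * \<delta>"
      if pq: "\<delta> \<le> p" "p \<le> q" "q \<le> 1" and cs: "csign {p..q} h" for p q
    proof -
      have "cmod (integral {p..q} (\<lambda>u. cis (- \<phi> u))) \<le> 8/\<epsilon> + 8 * \<delta>"
      proof (rule piece[OF pq(2) e0])
        fix x assume x: "x \<in> {p..q}"
        hence x0: "0 < x" using pq pos by auto
        show "(\<phi> has_real_derivative f x) (at x)" by (rule dphi[OF x0])
        show "(f has_real_derivative f' x) (at x)" by (rule df[OF x0])
      next
        have "continuous_on {p..q} g"
          by (meson DERIV_isCont continuous_at_imp_continuous_on dg pos atLeastAtMost_iff pq(1) order_trans)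
        thus "continuous_on {p..q} f'" unfolding f'_def
          using pq d0 by (intro continuous_intros) (auto dest: less_le_trans)
      next
        have "csign {p..q} f'"
          by (rule csign_mult[OF cs, of "\<lambda>x. x powr b1 / x^2"]) (use pq d0 gh in \<open>auto intro: less_le_trans\<close>)
        thus "(\<forall>x\<in>{p..q}. f' x \<ge> 0) \<or> (\<forall>x\<in>{p..q}. f' x \<le> 0)" unfolding csign_def .
      next
        fix r s assume "p \<le> r" "r \<le> s" "s \<le> q" "\<forall>x\<in>{r..s}. \<bar>f x\<bar> \<le> \<epsilon>"
        thus "s - r \<le> 8 * \<delta>" using comp pq by auto
      next
        show "0 \<le> 8 * \<delta>" using d0 by simp
      qed
      moreover have "8/\<epsilon> = 8 * \<delta>" using de e0 by (simp add: field_simps)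
      ultimately show ?thesis unfolding E_def by simp
    qed
    have comb: "integral {a..b} E = integral {a..c} E + integral {c..b} E"
      if "0 \<le> a" "a \<le> c" "c \<le> b" "b \<le> 1" for a b c
    proof -
      have "E integrable_on {a..b}" by (rule integrable_subinterval_real[OF IE]) (use that in auto)
      thus ?thesis using Henstock_Kurzweil_Integration.integral_combine[of a c b E] that by simp
    qed
    have o: "0 \<le> \<delta>" "\<delta> \<le> z1" "z1 \<le> z" "z \<le> z2" "z2 \<le> 1" using z z1 z2 d0 by auto
    have eqI: "integral {0..1} E = integral {0..\<delta>} E + (integral {\<delta>..z1} E + (integral {z1..z} E
        + (integral {z..z2} E + integral {z2..1} E)))"
    proof -
      have i1: "integral {0..1} E = integral {0..\<delta>} E + integral {\<delta>..1} E" by (rule comb) (use o in auto)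
      have i2: "integral {\<delta>..1} E = integral {\<delta>..z1} E + integral {z1..1} E" by (rule comb) (use o in auto)
      have i3: "integral {z1..1} E = integral {z1..z} E + integral {z..1} E" by (rule comb) (use o in auto)
      have i4: "integral {z..1} E = integral {z..z2} E + integral {z2..1} E" by (rule comb) (use o in auto)
      show ?thesis unfolding i1 i2 i3 i4 ..
    qed
    have "cmod (integral {0..1} E) \<le> cmod (integral {0..\<delta>} E) + (cmod (integral {\<delta>..z1} E) + (cmod (integral {z1..z} E)
        + (cmod (integral {z..z2} E) + cmod (integral {z2..1} E))))"
      unfolding eqI by (intro norm_tri2 norm_triangle_ineq)
    also have "\<dots> \<le> \<delta> + (16 * \<delta> + (16 * \<delta> + (16 * \<delta> + 16 * \<delta>)))"
      using bnd[of 0 \<delta>] o z1 z2 pc[of \<delta> z1] pc[of z1 z] pc[of z z2] pc[of z2 1]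
      by (intro add_mono) auto
    also have "\<dots> \<le> 97 * \<delta>" using d0 by simp
    finally show ?thesis unfolding E_def \<phi>_def \<delta>_def l_def .
  qed
qed




theorem lemma3p1:
  fixes \<alpha>1 \<alpha>2 m :: real
  assumes "\<alpha>1 > 0" and "\<alpha>2 > 0" and "\<alpha>1 \<noteq> \<alpha>2"
    and "m \<ge> 3 * (\<alpha>1 + \<alpha>2)"
  shows "\<exists>C > 0. \<forall>A1 A2 A3 :: real. A3 \<noteq> 0 \<longrightarrow>
           cmod (integral {0..1} (\<lambda>t::real.
               cis (- (A1 * t powr \<alpha>1 + A2 * t powr \<alpha>2 + A3 * t powr m))
               * complex_of_real (t powr (\<alpha>1 + \<alpha>2 - 1))))
           \<le> C * \<bar>A3\<bar> powr (- ((\<alpha>1 + \<alpha>2) / m))"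
proof -
  define a where "a = \<alpha>1 + \<alpha>2"
  have a0: "0 < a" unfolding a_def using assms by simp
  define b1 where "b1 = \<alpha>1 / a"
  define b2 where "b2 = \<alpha>2 / a"
  define M where "M = m / a"
  have b1: "0 < b1" and b2: "0 < b2" unfolding b1_def b2_def using assms a0 by auto
  have b12: "b1 + b2 = 1" unfolding b1_def b2_def a_def using a0 a_def by (simp add: add_divide_distrib[symmetric])
  have M3: "3 \<le> M" unfolding M_def using assms a0 unfolding a_def by (simp add: field_simps)
  have m0: "0 < m" using assms by simp
  have Mexp: "- 1 / M = - ((\<alpha>1 + \<alpha>2) / m)" unfolding M_def a_def using a0 m0 a_def by (simp add: field_simps)
  show ?thesis
  proof (intro exI[of _ "97 / a"] conjI allI impI)
    show "0 < 97 / a" using a0 by simp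
    fix A1 A2 A3 :: real assume A3: "A3 \<noteq> 0"
    define F where "F u = cis (- (A1 * u powr b1 + A2 * u powr b2 + A3 * u powr M))" for u
    define G where "G t = cis (- (A1 * t powr \<alpha>1 + A2 * t powr \<alpha>2 + A3 * t powr m))
               * complex_of_real (t powr (\<alpha>1 + \<alpha>2 - 1))" for t
    have cF: "continuous_on {0..1} F" unfolding F_def
      using b1 b2 M3 by (intro continuous_intros continuous_on_powr') auto
    have sub: "((\<lambda>x. (a * x powr (a - 1)) *\<^sub>R F (x powr a)) has_integral
        (integral {0 powr a..1 powr a} F - integral {1 powr a..0 powr a} F)) {0..1}"
    proof (rule has_integral_substitution_general[of "{0}" 0 1 "\<lambda>x. x powr a" 0 1 F])
      show "(\<lambda>x. x powr a) ` {0..1} \<subseteq> {0..1}"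
        using a0 by (auto intro!: powr_le1)
      show "continuous_on {0..1} (\<lambda>x. x powr a)"
        using a0 by (intro continuous_intros continuous_on_powr') auto
      fix x :: real assume x: "x \<in> {0..1} - {0}"
      hence x0: "0 < x" by auto
      show "((\<lambda>x. x powr a) has_real_derivative a * x powr (a - 1)) (at x within {0..1})"
        using has_field_derivative_at_within[OF has_real_derivative_powr[OF x0]] .
    qed (simp_all add: cF)
    have sub2: "((\<lambda>x. complex_of_real a * G x) has_integral integral {0..1} F) {0..1}"
    proof -
      have "integral {0 powr a..1 powr a} F - integral {1 powr a..0 powr a} F = integral {0..1} F"
        using a0 by simp
      hence "((\<lambda>x. (a * x powr (a - 1)) *\<^sub>R F (x powr a)) has_integral integral {0..1} F) {0..1}"
        using sub by simp
      moreover have "(a * x powr (a - 1)) *\<^sub>R F (x powr a) = complex_of_real a * G x" if "x \<in> {0..1}" for x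
      proof -
        have e1: "(x powr a) powr b1 = x powr \<alpha>1" unfolding powr_powr b1_def using a0 by simp
        have e2: "(x powr a) powr b2 = x powr \<alpha>2" unfolding powr_powr b2_def using a0 by simp
        have e3: "(x powr a) powr M = x powr m" unfolding powr_powr M_def using a0 by simp
        show ?thesis unfolding F_def G_def e1 e2 e3 a_def[symmetric] by (simp add: scaleR_conv_of_real)
      qed
      ultimately show ?thesis by (subst has_integral_cong[symmetric]) auto
    qed
    have "(G has_integral (integral {0..1} F / complex_of_real a)) {0..1}"
      using has_integral_mult_right_iff[of "complex_of_real a" G] sub2 a0 by simp
    hence "integral {0..1} G = integral {0..1} F / complex_of_real a" by (rule integral_unique)
    hence "cmod (integral {0..1} G) = cmod (integral {0..1} F) / a" using a0 by (simp add: norm_divide)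
    also have "\<dots> \<le> 97 * \<bar>A3\<bar> powr (- 1 / M) / a"
      using ulemma[OF b1 b2 b12 M3 A3, of A1 A2] a0 unfolding F_def by (simp add: divide_right_mono)
    also have "\<dots> = 97 / a * \<bar>A3\<bar> powr (- ((\<alpha>1 + \<alpha>2) / m))" unfolding Mexp by simp
    finally show "cmod (integral {0..1} (\<lambda>t::real.
               cis (- (A1 * t powr \<alpha>1 + A2 * t powr \<alpha>2 + A3 * t powr m))
               * complex_of_real (t powr (\<alpha>1 + \<alpha>2 - 1))))
           \<le> 97 / a * \<bar>A3\<bar> powr (- ((\<alpha>1 + \<alpha>2) / m))" unfolding G_def .
  qed
qed


end
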